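(* Let $X$ be a homogeneous chain that is not simple and has no proper regular interval which is a simple chain. Then $(\mathrm{Aut}(X),\tau_p)$ is Roelcke precompact if and only if for every proper regular interval $J$ of $X$ the group $(\mathrm{Aut}(X/J),\tau_\partial)$ is Roelcke precompact.
   Context: Chain: linearly ordered set; $\mathrm{Aut}(Y)$: order-preserving bijections; homogeneous: $\mathrm{Aut}(X)$ transitive. An interval is a convex subset; $J$ is regular if for all $x,y\in J$, $g\in\mathrm{Aut}(X)$, $g(x)\in J\Rightarrow g(y)\in J$; proper if neither a singleton nor $X$. A homogeneous chain is simple if it has no proper regular interval. For a proper regular interval $J$, $X/J$ is the chain of equivalence classes of $x\sim_J y\iff\forall g\in\mathrm{Aut}(X)\,(g(x)\in J\Rightarrow g(y)\in J)$, with the induced order. $\tau_p$: topology of pointwise convergence w.r.t. the order topology on $X$; $\tau_\partial$: permutation topology (identity neighbourhood base: pointwise stabilizers of finite sets). Roelcke precompact: the Roelcke uniformity (greatest lower bound of left and right uniformities) is totally bounded. *)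

theory Defs
  imports "HOL-Analysis.Analysis"
begin

text \<open>A chain is a carrier set X with a linear order le on X.
  Automorphisms are represented as functions that are the identity outside X,
  so that the group operation is composition and the unit is id.\<close>

definition is_chain :: "'a set \<Rightarrow> ('a \<Rightarrow> 'a \<Rightarrow> bool) \<Rightarrow> bool" where
  "is_chain X le \<longleftrightarrow>
     (\<forall>x\<in>X. le x x) \<and>
     (\<forall>x\<in>X. \<forall>y\<in>X. le x y \<and> le y x \<longrightarrow> x = y) \<and>
     (\<forall>x\<in>X. \<forall>y\<in>X. \<forall>z\<in>X. le x y \<and> le y z \<longrightarrow> le x z) \<and>
     (\<forall>x\<in>X. \<forall>y\<in>X. le x y \<or> le y x)"

definition Aut :: "'a set \<Rightarrow> ('a \<Rightarrow> 'a \<Rightarrow> bool) \<Rightarrow> ('a \<Rightarrow> 'a) set" where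
  "Aut X le = {f. bij_betw f X X \<and> (\<forall>x\<in>X. \<forall>y\<in>X. le x y \<longrightarrow> le (f x) (f y))
                 \<and> (\<forall>x. x \<notin> X \<longrightarrow> f x = x)}"

definition homogeneous :: "'a set \<Rightarrow> ('a \<Rightarrow> 'a \<Rightarrow> bool) \<Rightarrow> bool" where
  "homogeneous X le \<longleftrightarrow> is_chain X le \<and> (\<forall>x\<in>X. \<forall>y\<in>X. \<exists>g\<in>Aut X le. g x = y)"

definition is_interval :: "'a set \<Rightarrow> ('a \<Rightarrow> 'a \<Rightarrow> bool) \<Rightarrow> 'a set \<Rightarrow> bool" where
  "is_interval X le J \<longleftrightarrow> J \<subseteq> X \<and> J \<noteq> {} \<and>
     (\<forall>x\<in>J. \<forall>z\<in>J. \<forall>y\<in>X. le x y \<and> le y z \<longrightarrow> y \<in> J)"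

definition regular_interval :: "'a set \<Rightarrow> ('a \<Rightarrow> 'a \<Rightarrow> bool) \<Rightarrow> 'a set \<Rightarrow> bool" where
  "regular_interval X le J \<longleftrightarrow> is_interval X le J \<and>
     (\<forall>x\<in>J. \<forall>y\<in>J. \<forall>g\<in>Aut X le. g x \<in> J \<longrightarrow> g y \<in> J)"

definition proper_regular_interval :: "'a set \<Rightarrow> ('a \<Rightarrow> 'a \<Rightarrow> bool) \<Rightarrow> 'a set \<Rightarrow> bool" where
  "proper_regular_interval X le J \<longleftrightarrow> regular_interval X le J \<and>
     (\<nexists>a. J = {a}) \<and> J \<noteq> X"

definition simple_chain :: "'a set \<Rightarrow> ('a \<Rightarrow> 'a \<Rightarrow> bool) \<Rightarrow> bool" where
  "simple_chain X le \<longleftrightarrow> homogeneous X le \<and> (\<nexists>J. proper_regular_interval X le J)"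

definition quot_rel :: "'a set \<Rightarrow> ('a \<Rightarrow> 'a \<Rightarrow> bool) \<Rightarrow> 'a set \<Rightarrow> ('a \<times> 'a) set" where
  "quot_rel X le J = {(x, y). x \<in> X \<and> y \<in> X \<and> (\<forall>g\<in>Aut X le. g x \<in> J \<longrightarrow> g y \<in> J)}"

definition quot_carrier :: "'a set \<Rightarrow> ('a \<Rightarrow> 'a \<Rightarrow> bool) \<Rightarrow> 'a set \<Rightarrow> 'a set set" where
  "quot_carrier X le J = X // quot_rel X le J"

definition quot_le :: "('a \<Rightarrow> 'a \<Rightarrow> bool) \<Rightarrow> 'a set \<Rightarrow> 'a set \<Rightarrow> bool" where
  "quot_le le A B \<longleftrightarrow> A = B \<or> (\<forall>a\<in>A. \<forall>b\<in>B. le a b)"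

definition order_topology_on :: "'a set \<Rightarrow> ('a \<Rightarrow> 'a \<Rightarrow> bool) \<Rightarrow> 'a topology" where
  "order_topology_on X le = topology_generated_by
     (insert X ((\<lambda>a. {y\<in>X. le y a \<and> y \<noteq> a}) ` X \<union> (\<lambda>a. {y\<in>X. le a y \<and> y \<noteq> a}) ` X))"

definition pointwise_topology :: "'a set \<Rightarrow> ('a \<Rightarrow> 'a \<Rightarrow> bool) \<Rightarrow> ('a \<Rightarrow> 'a) topology" where
  "pointwise_topology X le = topology_generated_by
     (insert (Aut X le) {{g \<in> Aut X le. g x \<in> V} | x V. x \<in> X \<and> openin (order_topology_on X le) V})"

definition nhds_id_p :: "'a set \<Rightarrow> ('a \<Rightarrow> 'a \<Rightarrow> bool) \<Rightarrow> ('a \<Rightarrow> 'a) set set" where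
  "nhds_id_p X le = {U. U \<subseteq> Aut X le \<and>
     (\<exists>W. openin (pointwise_topology X le) W \<and> id \<in> W \<and> W \<subseteq> U)}"

definition nhds_id_perm :: "'a set \<Rightarrow> ('a \<Rightarrow> 'a \<Rightarrow> bool) \<Rightarrow> ('a \<Rightarrow> 'a) set set" where
  "nhds_id_perm X le = {U. U \<subseteq> Aut X le \<and>
     (\<exists>F. finite F \<and> F \<subseteq> X \<and> {g \<in> Aut X le. \<forall>x\<in>F. g x = x} \<subseteq> U)}"

definition roelcke_entourage :: "('a \<Rightarrow> 'a) set \<Rightarrow> ('a \<Rightarrow> 'a) set \<Rightarrow> (('a \<Rightarrow> 'a) \<times> ('a \<Rightarrow> 'a)) set" where
  "roelcke_entourage G U = {(g, h). g \<in> G \<and> h \<in> G \<and> (\<exists>u\<in>U. \<exists>v\<in>U. h = u \<circ> g \<circ> v)}"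

definition roelcke_precompact :: "('a \<Rightarrow> 'a) set \<Rightarrow> ('a \<Rightarrow> 'a) set set \<Rightarrow> bool" where
  "roelcke_precompact G N \<longleftrightarrow>
     (\<forall>U\<in>N. \<exists>F. finite F \<and> F \<subseteq> G \<and> G \<subseteq> (\<Union>f\<in>F. roelcke_entourage G U `` {f}))"

end

theory Submission imports Defs begin

locale hc =
  fixes X :: "'a set" and le :: "'a \<Rightarrow> 'a \<Rightarrow> bool"
  assumes hom: "homogeneous X le"
begin

abbreviation "G \<equiv> Aut X le"
definition "lt x y \<longleftrightarrow> le x y \<and> x \<noteq> y"

lemma chain: "is_chain X le" using hom unfolding homogeneous_def by simp
lemma lrefl: "x \<in> X \<Longrightarrow> le x x" using chain unfolding is_chain_def by simp
lemma antisym: "x \<in> X \<Longrightarrow> y \<in> X \<Longrightarrow> le x y \<Longrightarrow> le y x \<Longrightarrow> x = y"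
  using chain unfolding is_chain_def by blast
lemma ltrans: "x \<in> X \<Longrightarrow> y \<in> X \<Longrightarrow> z \<in> X \<Longrightarrow> le x y \<Longrightarrow> le y z \<Longrightarrow> le x z"
proof -
  assume a: "x \<in> X" "y \<in> X" "z \<in> X" "le x y" "le y z"
  have "\<forall>x\<in>X. \<forall>y\<in>X. \<forall>z\<in>X. le x y \<and> le y z \<longrightarrow> le x z" using chain unfolding is_chain_def by (elim conjE)
  then show ?thesis using a by blast
qed
lemma linear: "x \<in> X \<Longrightarrow> y \<in> X \<Longrightarrow> le x y \<or> le y x"
  using chain unfolding is_chain_def by blast
lemma homog: "x \<in> X \<Longrightarrow> y \<in> X \<Longrightarrow> \<exists>g\<in>G. g x = y"
  using hom unfolding homogeneous_def by blast

lemma aut_bij: "g \<in> G \<Longrightarrow> bij_betw g X X" unfolding Aut_def by auto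
lemma aut_mem: "g \<in> G \<Longrightarrow> x \<in> X \<Longrightarrow> g x \<in> X"
  using aut_bij bij_betwE by blast
lemma aut_out: "g \<in> G \<Longrightarrow> x \<notin> X \<Longrightarrow> g x = x" unfolding Aut_def by auto
lemma aut_mono: "g \<in> G \<Longrightarrow> x \<in> X \<Longrightarrow> y \<in> X \<Longrightarrow> le x y \<Longrightarrow> le (g x) (g y)"
  unfolding Aut_def by auto
lemma aut_inj: "g \<in> G \<Longrightarrow> x \<in> X \<Longrightarrow> y \<in> X \<Longrightarrow> g x = g y \<Longrightarrow> x = y"
  using aut_bij bij_betw_imp_inj_on inj_onD by metis
lemma aut_img: "g \<in> G \<Longrightarrow> g ` X = X"
  using aut_bij bij_betw_imp_surj_on by metis
lemma aut_le_iff: assumes "g \<in> G" "x \<in> X" "y \<in> X" shows "le (g x) (g y) \<longleftrightarrow> le x y"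
proof
  assume a: "le (g x) (g y)"
  show "le x y"
  proof (rule ccontr)
    assume "\<not> le x y"
    then have "le y x" using linear[OF assms(2,3)] by simp
    then have "le (g y) (g x)" using aut_mono[OF assms(1,3,2)] by simp
    then have "g x = g y" using antisym[OF aut_mem[OF assms(1,2)] aut_mem[OF assms(1,3)] a] by simp
    then have "x = y" using aut_inj[OF assms] by simp
    then show False using \<open>\<not> le x y\<close> lrefl[OF assms(2)] by simp
  qed
qed (rule aut_mono[OF assms])
lemma aut_lt_iff: assumes "g \<in> G" "x \<in> X" "y \<in> X" shows "lt (g x) (g y) \<longleftrightarrow> lt x y"
  unfolding lt_def using aut_le_iff[OF assms] aut_inj[OF assms] by metis

lemma id_aut: "id \<in> G" unfolding Aut_def by (intro CollectI conjI ballI impI allI) (simp_all add: bij_betw_id)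
lemma comp_aut: assumes "g \<in> G" "h \<in> G" shows "g \<circ> h \<in> G"
proof -
  have "bij_betw (g \<circ> h) X X" using bij_betw_trans[OF aut_bij[OF assms(2)] aut_bij[OF assms(1)]] .
  moreover have "le ((g \<circ> h) x) ((g \<circ> h) y)" if "x \<in> X" "y \<in> X" "le x y" for x y
    using that assms by (simp add: aut_mono aut_mem)
  moreover have "(g \<circ> h) x = x" if "x \<notin> X" for x using that assms by (simp add: aut_out)
  ultimately show ?thesis unfolding Aut_def by (intro CollectI conjI ballI impI allI) auto
qed

definition "ginv g = (\<lambda>z. if z \<in> X then inv_into X g z else z)"

lemma ginv_r: "g \<in> G \<Longrightarrow> g (ginv g z) = z"
  unfolding ginv_def using aut_img aut_out
  by (auto simp: f_inv_into_f)
lemma ginv_l: assumes "g \<in> G" shows "ginv g (g z) = z"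
proof (cases "z \<in> X")
  case True then show ?thesis unfolding ginv_def using aut_mem[OF assms True] aut_bij[OF assms]
    by (simp add: bij_betw_inv_into_left)
next
  case False then show ?thesis unfolding ginv_def using aut_out[OF assms False] by simp
qed
lemma ginv_mem: "g \<in> G \<Longrightarrow> x \<in> X \<Longrightarrow> ginv g x \<in> X"
  unfolding ginv_def using aut_img by (auto simp: inv_into_into)
lemma ginv_aut: assumes "g \<in> G" shows "ginv g \<in> G"
proof -
  have b: "bij_betw (ginv g) X X"
    by (rule bij_betw_byWitness[where f'=g]) (use assms ginv_r ginv_l ginv_mem aut_mem in auto)
  have m: "le (ginv g x) (ginv g y)" if "x \<in> X" "y \<in> X" "le x y" for x y
    using aut_le_iff[OF assms ginv_mem[OF assms that(1)] ginv_mem[OF assms that(2)]] ginv_r[OF assms] that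
    by simp
  have o: "ginv g x = x" if "x \<notin> X" for x using that unfolding ginv_def by simp
  show ?thesis unfolding Aut_def by (intro CollectI conjI ballI impI allI b m o)
qed
lemma comp_ginv: "g \<in> G \<Longrightarrow> g \<circ> ginv g = id" by (rule ext) (simp add: ginv_r)
lemma ginv_comp: "g \<in> G \<Longrightarrow> ginv g \<circ> g = id" by (rule ext) (simp add: ginv_l)

definition "blk K \<longleftrightarrow> K \<subseteq> X \<and> (\<forall>x\<in>K. \<forall>y\<in>K. \<forall>g\<in>G. g x \<in> K \<longrightarrow> g y \<in> K)"

lemma blkD: "blk K \<Longrightarrow> x \<in> K \<Longrightarrow> y \<in> K \<Longrightarrow> g \<in> G \<Longrightarrow> g x \<in> K \<Longrightarrow> g y \<in> K"
  unfolding blk_def by blast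
lemma blk_sub: "blk K \<Longrightarrow> K \<subseteq> X" unfolding blk_def by blast

lemma blk_img: assumes "blk K" "g \<in> G" "x \<in> K" "g x \<in> K" shows "g ` K = K"
proof
  show "g ` K \<subseteq> K" using blkD[OF assms(1,3) _ assms(2,4)] by blast
  show "K \<subseteq> g ` K"
  proof
    fix y assume y: "y \<in> K"
    have "ginv g (g x) \<in> K" using assms ginv_l by simp
    then have "ginv g y \<in> K" using blkD[OF assms(1) assms(4) y ginv_aut[OF assms(2)]] by blast
    moreover have "y = g (ginv g y)" using ginv_r[OF assms(2)] by simp
    ultimately show "y \<in> g ` K" by blast
  qed
qed

lemma blk_noend: assumes "blk K" "x \<in> K" "y \<in> K" "x \<noteq> y"
  shows "(\<exists>a\<in>K. lt a x) \<and> (\<exists>b\<in>K. lt x b)"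
proof -
  have X: "x \<in> X" "y \<in> X" using assms blk_sub by auto
  have "lt x y \<or> lt y x" using linear[OF X] assms(4) unfolding lt_def by blast
  then show ?thesis
  proof
    assume xy: "lt x y"
    obtain g where g: "g \<in> G" "g y = x" using homog[OF X(2,1)] by blast
    have "g x \<in> K" using blkD[OF assms(1,3,2) g(1)] g(2) assms(2) by simp
    moreover have "lt (g x) x" using aut_lt_iff[OF g(1) X] xy g(2) by simp
    ultimately show ?thesis using xy assms(3) by blast
  next
    assume yx: "lt y x"
    obtain g where g: "g \<in> G" "g y = x" using homog[OF X(2,1)] by blast
    have "g x \<in> K" using blkD[OF assms(1,3,2) g(1)] g(2) assms(2) by simp
    moreover have "lt x (g x)" using aut_lt_iff[OF g(1) X(2,1)] yx g(2) by simp
    ultimately show ?thesis using yx assms(3) by blast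
  qed
qed

lemma blk_restrict: assumes "K \<subseteq> X" "g \<in> G" "g ` K = K"
  shows "(\<lambda>z. if z \<in> K then g z else z) \<in> Aut K le"
proof -
  let ?r = "(\<lambda>z. if z \<in> K then g z else z)"
  have "inj_on g K" using aut_bij[OF assms(2)] assms(1) bij_betw_imp_inj_on inj_on_subset by blast
  then have "inj_on ?r K" unfolding inj_on_def by simp
  moreover have "?r ` K = K" using assms(3) by (auto simp: image_def)
  ultimately have b: "bij_betw ?r K K" unfolding bij_betw_def by blast
  have m: "le (?r x) (?r y)" if "x \<in> K" "y \<in> K" "le x y" for x y
    using aut_mono[OF assms(2)] that assms(1) by auto
  have o: "?r x = x" if "x \<notin> K" for x using that by simp
  show ?thesis unfolding Aut_def by (intro CollectI conjI ballI impI allI b m o)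
qed

lemma reg_blk: "regular_interval X le J \<Longrightarrow> blk J"
  unfolding regular_interval_def is_interval_def blk_def by blast

lemma reg_conv: "regular_interval X le J \<Longrightarrow> x \<in> J \<Longrightarrow> z \<in> J \<Longrightarrow> y \<in> X \<Longrightarrow> le x y \<Longrightarrow> le y z \<Longrightarrow> y \<in> J"
  unfolding regular_interval_def is_interval_def by blast

lemma reg_ne: "regular_interval X le J \<Longrightarrow> J \<noteq> {}"
  unfolding regular_interval_def is_interval_def by blast

lemma reg_sub: "regular_interval X le J \<Longrightarrow> J \<subseteq> X"
  unfolding regular_interval_def is_interval_def by blast

definition "cls J x = quot_rel X le J `` {x}"

lemma ex_into: assumes "regular_interval X le J" "y \<in> X" shows "\<exists>h\<in>G. h y \<in> J"
proof -
  obtain j where "j \<in> J" using reg_ne[OF assms(1)] by blast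
  then show ?thesis using homog[OF assms(2)] reg_sub[OF assms(1)] by blast
qed

lemma cls_eq: assumes J: "regular_interval X le J" and h: "h \<in> G" "y \<in> X" "h y \<in> J"
  shows "cls J y = {z\<in>X. h z \<in> J}"
proof
  show "cls J y \<subseteq> {z\<in>X. h z \<in> J}" unfolding cls_def quot_rel_def using h by blast
  show "{z\<in>X. h z \<in> J} \<subseteq> cls J y"
  proof
    fix z assume z: "z \<in> {z\<in>X. h z \<in> J}"
    have "g z \<in> J" if g: "g \<in> G" "g y \<in> J" for g
    proof -
      have k: "g \<circ> ginv h \<in> G" using comp_aut[OF g(1) ginv_aut[OF h(1)]] .
      have "(g \<circ> ginv h) (h y) \<in> J" using g ginv_l[OF h(1)] by simp
      then have "(g \<circ> ginv h) (h z) \<in> J" using blkD[OF reg_blk[OF J] h(3) _ k] z by blast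
      then show ?thesis using ginv_l[OF h(1)] by simp
    qed
    then show "z \<in> cls J y" unfolding cls_def quot_rel_def using z h(2) by blast
  qed
qed

lemma cls_self: assumes "regular_interval X le J" "x \<in> X" shows "x \<in> cls J x"
  unfolding cls_def quot_rel_def using assms by blast

lemma cls_sub: "cls J x \<subseteq> X" unfolding cls_def quot_rel_def by blast

lemma cls_same: assumes J: "regular_interval X le J" and "x \<in> X" "y \<in> cls J x"
  shows "cls J y = cls J x"
proof -
  obtain h where h: "h \<in> G" "h x \<in> J" using ex_into[OF J assms(2)] by blast
  have c: "cls J x = {z\<in>X. h z \<in> J}" using cls_eq[OF J h(1) assms(2) h(2)] .
  then have "y \<in> X" "h y \<in> J" using assms(3) by auto
  then show ?thesis using cls_eq[OF J h(1)] c by simp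
qed

lemma cls_disj: assumes J: "regular_interval X le J" and "x \<in> X" "y \<in> X" "z \<in> cls J x" "z \<in> cls J y"
  shows "cls J x = cls J y"
  using cls_same[OF J assms(2,4)] cls_same[OF J assms(3,5)] by simp

lemma cls_img: assumes J: "regular_interval X le J" and g: "g \<in> G" and x: "x \<in> X"
  shows "g ` cls J x = cls J (g x)"
proof -
  have gx: "g x \<in> X" using aut_mem[OF g x] .
  obtain h where h: "h \<in> G" "h (g x) \<in> J" using ex_into[OF J gx] by blast
  have hg: "h \<circ> g \<in> G" using comp_aut[OF h(1) g] .
  have c1: "cls J (g x) = {z\<in>X. h z \<in> J}" using cls_eq[OF J h(1) gx h(2)] .
  have c2: "cls J x = {z\<in>X. (h \<circ> g) z \<in> J}" using cls_eq[OF J hg x] h(2) by simp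
  have "g ` {z\<in>X. (h \<circ> g) z \<in> J} = {z\<in>X. h z \<in> J}"
  proof
    show "g ` {z\<in>X. (h \<circ> g) z \<in> J} \<subseteq> {z\<in>X. h z \<in> J}" using aut_mem[OF g] by auto
    show "{z\<in>X. h z \<in> J} \<subseteq> g ` {z\<in>X. (h \<circ> g) z \<in> J}"
    proof
      fix w assume w: "w \<in> {z\<in>X. h z \<in> J}"
      have "w = g (ginv g w)" using ginv_r[OF g] by simp
      moreover have "ginv g w \<in> {z\<in>X. (h \<circ> g) z \<in> J}" using w ginv_mem[OF g] ginv_r[OF g] by simp
      ultimately show "w \<in> g ` {z\<in>X. (h \<circ> g) z \<in> J}" by blast
    qed
  qed
  then show ?thesis using c1 c2 by simp
qed

lemma cls_blk: assumes J: "regular_interval X le J" and x: "x \<in> X" shows "blk (cls J x)"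
  unfolding blk_def
proof (intro conjI ballI impI)
  show "cls J x \<subseteq> X" by (rule cls_sub)
  fix y z g assume y: "y \<in> cls J x" and z: "z \<in> cls J x" and g: "g \<in> G" and gy: "g y \<in> cls J x"
  have yX: "y \<in> X" using y cls_sub by blast
  have "g ` cls J y = cls J (g y)" using cls_img[OF J g yX] .
  then have "g ` cls J x = cls J x" using cls_same[OF J x y] cls_same[OF J x gy] by simp
  then show "g z \<in> cls J x" using z by blast
qed

lemma cls_conv: assumes J: "regular_interval X le J" and x: "x \<in> X"
  and "a \<in> cls J x" "b \<in> cls J x" "y \<in> X" "le a y" "le y b" shows "y \<in> cls J x"
proof -
  obtain h where h: "h \<in> G" "h x \<in> J" using ex_into[OF J x] by blast
  have c: "cls J x = {z\<in>X. h z \<in> J}" using cls_eq[OF J h(1) x h(2)] .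
  have "h a \<in> J" "h b \<in> J" "a \<in> X" "b \<in> X" using assms c by auto
  moreover have "le (h a) (h y)" "le (h y) (h b)" using aut_mono[OF h(1)] assms calculation by auto
  ultimately have "h y \<in> J" using reg_conv[OF J] aut_mem[OF h(1) assms(5)] by blast
  then show ?thesis using c assms(5) by blast
qed

lemma cls_two: assumes J: "regular_interval X le J" "\<nexists>a. J = {a}" and x: "x \<in> X"
  shows "\<exists>y\<in>cls J x. y \<noteq> x"
proof -
  obtain h where h: "h \<in> G" "h x \<in> J" using ex_into[OF J(1) x] by blast
  have c: "cls J x = {z\<in>X. h z \<in> J}" using cls_eq[OF J(1) h(1) x h(2)] .
  obtain j where j: "j \<in> J" "j \<noteq> h x" using J(2) h(2) by blast
  have jX: "j \<in> X" using j reg_sub[OF J(1)] by blast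
  have "ginv h j \<in> cls J x" using c ginv_mem[OF h(1) jX] ginv_r[OF h(1)] j by simp
  moreover have "ginv h j \<noteq> x" using j ginv_r[OF h(1)] by metis
  ultimately show ?thesis by blast
qed

abbreviation "Q J \<equiv> quot_carrier X le J"

lemma Q_iff: "C \<in> Q J \<longleftrightarrow> (\<exists>x\<in>X. C = cls J x)"
  unfolding quot_carrier_def quotient_def cls_def by blast

definition "hat J g = (\<lambda>C. if C \<in> Q J then g ` C else C)"

lemma hat_Q: assumes J: "regular_interval X le J" and g: "g \<in> G" and C: "C \<in> Q J"
  shows "g ` C \<in> Q J"
proof -
  obtain x where x: "x \<in> X" "C = cls J x" using C Q_iff by blast
  then show ?thesis using cls_img[OF J g x(1)] aut_mem[OF g x(1)] Q_iff by auto
qed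

lemma hat_comp: assumes J: "regular_interval X le J" and "g \<in> G" "h \<in> G"
  shows "hat J (g \<circ> h) = hat J g \<circ> hat J h"
proof
  fix C show "hat J (g \<circ> h) C = (hat J g \<circ> hat J h) C"
    using hat_Q[OF J assms(3)] unfolding hat_def by (simp add: image_comp)
qed

lemma hat_in: assumes J: "regular_interval X le J" and g: "g \<in> G" and C: "C \<in> Q J"
  shows "hat J g C = g ` C" unfolding hat_def using C by simp

lemma Q_sub: "C \<in> Q J \<Longrightarrow> C \<subseteq> X" using Q_iff cls_sub by blast

lemma hat_aut: assumes J: "regular_interval X le J" and g: "g \<in> G"
  shows "hat J g \<in> Aut (Q J) (quot_le le)"
proof -
  have gi: "ginv g \<in> G" using ginv_aut[OF g] .
  have b: "bij_betw (hat J g) (Q J) (Q J)"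
  proof (rule bij_betw_byWitness[where f'="hat J (ginv g)"])
    show "\<forall>a\<in>Q J. hat J (ginv g) (hat J g a) = a"
      using hat_Q[OF J g] unfolding hat_def by (simp add: image_comp ginv_comp[OF g])
    show "\<forall>a\<in>Q J. hat J g (hat J (ginv g) a) = a"
      using hat_Q[OF J gi] unfolding hat_def by (simp add: image_comp comp_ginv[OF g])
    show "hat J g ` Q J \<subseteq> Q J" using hat_Q[OF J g] hat_in[OF J g] by auto
    show "hat J (ginv g) ` Q J \<subseteq> Q J" using hat_Q[OF J gi] hat_in[OF J gi] by auto
  qed
  have m: "quot_le le (hat J g A) (hat J g B)" if "A \<in> Q J" "B \<in> Q J" "quot_le le A B" for A B
  proof -
    have "A = B \<or> (\<forall>a\<in>A. \<forall>b\<in>B. le a b)" using that(3) unfolding quot_le_def .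
    then have "g ` A = g ` B \<or> (\<forall>a\<in>g ` A. \<forall>b\<in>g ` B. le a b)"
      using aut_mono[OF g] Q_sub[OF that(1)] Q_sub[OF that(2)] by blast
    then show ?thesis unfolding quot_le_def using hat_in[OF J g] that by simp
  qed
  have o: "hat J g C = C" if "C \<notin> Q J" for C using that unfolding hat_def by simp
  show ?thesis unfolding Aut_def by (intro CollectI conjI ballI impI allI b m o)
qed

lemma cls_order: assumes J: "regular_interval X le J" and x: "x \<in> X" and y: "y \<in> X"
  and ne: "cls J x \<noteq> cls J y" and xy: "le x y" and a: "a \<in> cls J x" and b: "b \<in> cls J y"
  shows "le a b"
proof (rule ccontr)
  assume nab: "\<not> le a b"
  have aX: "a \<in> X" and bX: "b \<in> X" using a b cls_sub by auto
  have ba: "le b a" using linear[OF aX bX] nab by blast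
  have xs: "x \<in> cls J x" and ys: "y \<in> cls J y" using cls_self[OF J] x y by auto
  show False
  proof (cases "le y a")
    case True
    then have "y \<in> cls J x" using cls_conv[OF J x xs a y xy] by blast
    then show False using cls_disj[OF J x y _ ys] ne by blast
  next
    case False
    then have ay: "le a y" using linear[OF aX y] by blast
    show False
    proof (cases "le x b")
      case True
      then have "b \<in> cls J x" using cls_conv[OF J x xs a bX True ba] by blast
      then show False using cls_disj[OF J x y _ b] ne by blast
    next
      case False
      then have bx: "le b x" using linear[OF x bX] by blast
      then have "x \<in> cls J y" using cls_conv[OF J y b ys x bx xy] by blast
      then show False using cls_disj[OF J x y xs] ne by blast
    qed
  qed
qed

lemma lift: assumes J: "regular_interval X le J" and phi: "\<phi> \<in> Aut (Q J) (quot_le le)"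
  shows "\<exists>L\<in>G. hat J L = \<phi>"
proof -
  have pb: "bij_betw \<phi> (Q J) (Q J)" using phi unfolding Aut_def by blast
  have pQ: "\<phi> C \<in> Q J" if "C \<in> Q J" for C using pb that bij_betwE by blast
  have pinj: "C = D" if "C \<in> Q J" "D \<in> Q J" "\<phi> C = \<phi> D" for C D
    using pb that bij_betw_imp_inj_on inj_onD by metis
  have pm: "quot_le le (\<phi> C) (\<phi> D)" if "C \<in> Q J" "D \<in> Q J" "quot_le le C D" for C D
    using phi that unfolding Aut_def by blast
  have po: "\<phi> C = C" if "C \<notin> Q J" for C using phi that unfolding Aut_def by blast
  have exh: "\<exists>h. h \<in> G \<and> h ` C = \<phi> C" if C: "C \<in> Q J" for C
  proof -
    obtain x where x: "x \<in> X" "C = cls J x" using C Q_iff by blast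
    obtain y where y: "y \<in> X" "\<phi> C = cls J y" using pQ[OF C] Q_iff by blast
    obtain h where h: "h \<in> G" "h x = y" using homog[OF x(1) y(1)] by blast
    show ?thesis using cls_img[OF J h(1) x(1)] h x y by auto
  qed
  define H where "H C = (SOME h. h \<in> G \<and> h ` C = \<phi> C)" for C
  have H: "H C \<in> G" "H C ` C = \<phi> C" if "C \<in> Q J" for C
    using someI_ex[OF exh[OF that]] unfolding H_def by auto
  define L where "L z = (if z \<in> X then H (cls J z) z else z)" for z
  have cQ: "cls J z \<in> Q J" if "z \<in> X" for z using that Q_iff by blast
  have Lin: "L z \<in> \<phi> (cls J z)" if z: "z \<in> X" for z
    using H[OF cQ[OF z]] cls_self[OF J z] z unfolding L_def by auto
  have LX: "L z \<in> X" if z: "z \<in> X" for z using Lin[OF z] Q_sub[OF pQ[OF cQ[OF z]]] by blast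
  have Lmono: "le (L x) (L y)" if xy: "x \<in> X" "y \<in> X" "le x y" for x y
  proof (cases "cls J x = cls J y")
    case True
    then show ?thesis using aut_mono[OF H(1)[OF cQ[OF xy(1)]] xy] unfolding L_def using xy by simp
  next
    case False
    have "\<forall>a\<in>cls J x. \<forall>b\<in>cls J y. le a b" using cls_order[OF J xy(1,2) False xy(3)] by blast
    then have "quot_le le (cls J x) (cls J y)" unfolding quot_le_def by blast
    then have q: "quot_le le (\<phi> (cls J x)) (\<phi> (cls J y))" using pm cQ xy by blast
    have "\<phi> (cls J x) \<noteq> \<phi> (cls J y)" using pinj cQ xy False by blast
    then show ?thesis using q Lin xy unfolding quot_le_def by blast
  qed
  have Linj: "x = y" if xy: "x \<in> X" "y \<in> X" "L x = L y" for x y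
  proof -
    have "\<phi> (cls J x) = \<phi> (cls J y)"
    proof -
      obtain u where u: "u \<in> X" "\<phi> (cls J x) = cls J u" using pQ[OF cQ[OF xy(1)]] Q_iff by blast
      obtain v where v: "v \<in> X" "\<phi> (cls J y) = cls J v" using pQ[OF cQ[OF xy(2)]] Q_iff by blast
      have "L x \<in> cls J u" "L x \<in> cls J v" using Lin[OF xy(1)] Lin[OF xy(2)] xy(3) u v by auto
      then show ?thesis using cls_disj[OF J u(1) v(1)] u v by simp
    qed
    then have e: "cls J x = cls J y" using pinj cQ xy by blast
    then have "H (cls J x) x = H (cls J x) y" using xy unfolding L_def by simp
    then show ?thesis using aut_inj[OF H(1)[OF cQ[OF xy(1)]] xy(1,2)] by blast
  qed
  have Lsurj: "y \<in> L ` X" if y: "y \<in> X" for y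
  proof -
    obtain C where C: "C \<in> Q J" "\<phi> C = cls J y" using pb cQ[OF y] bij_betw_iff_bijections by metis
    obtain x where x: "x \<in> X" "C = cls J x" using C Q_iff by blast
    have "y \<in> H C ` C" using H(2)[OF C(1)] C(2) cls_self[OF J y] by simp
    then obtain w where w: "w \<in> C" "y = H C w" by blast
    have wX: "w \<in> X" using w x cls_sub by blast
    have "cls J w = C" using cls_same[OF J x(1)] w x by simp
    then have "L w = y" using w wX unfolding L_def by simp
    then show ?thesis using wX by blast
  qed
  have b: "bij_betw L X X" unfolding bij_betw_def inj_on_def using Linj Lsurj LX by blast
  have o: "L z = z" if "z \<notin> X" for z using that unfolding L_def by simp
  have LG: "L \<in> G" unfolding Aut_def by (intro CollectI conjI ballI impI allI b Lmono o)
  have "hat J L C = \<phi> C" for C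
  proof (cases "C \<in> Q J")
    case True
    obtain x where x: "x \<in> X" "C = cls J x" using True Q_iff by blast
    have "L ` C = H C ` C"
    proof (rule image_cong[OF refl])
      fix w assume w: "w \<in> C"
      have wX: "w \<in> X" using w x cls_sub by blast
      have "cls J w = C" using cls_same[OF J x(1)] w x by simp
      then show "L w = H C w" using wX unfolding L_def by simp
    qed
    then show ?thesis using hat_in[OF J LG True] H(2)[OF True] by simp
  next
    case False
    then show ?thesis unfolding hat_def using po by simp
  qed
  then show ?thesis using LG by blast
qed

lemma prop_reg: "proper_regular_interval X le J \<Longrightarrow> regular_interval X le J"
  unfolding proper_regular_interval_def by blast

lemma prop_two: assumes "proper_regular_interval X le J" "x \<in> J" shows "\<exists>y\<in>J. y \<noteq> x"
  using assms unfolding proper_regular_interval_def by blast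

lemma translate: assumes J: "proper_regular_interval X le J" and g: "g \<in> G"
  shows "proper_regular_interval X le (g ` J)"
proof -
  have R: "regular_interval X le J" using prop_reg[OF J] .
  have JX: "J \<subseteq> X" using reg_sub[OF R] .
  have sub: "g ` J \<subseteq> X" using JX aut_mem[OF g] by blast
  have ne: "g ` J \<noteq> {}" using reg_ne[OF R] by blast
  have conv: "y \<in> g ` J" if th: "u \<in> g ` J" "w \<in> g ` J" "y \<in> X" "le u y" "le y w" for u w y
  proof -
    obtain p q where pq: "p \<in> J" "q \<in> J" "u = g p" "w = g q" using th by blast
    have yi: "ginv g y \<in> X" "g (ginv g y) = y" using ginv_mem[OF g that(3)] ginv_r[OF g] by auto
    have "le p (ginv g y)" "le (ginv g y) q"
      using aut_le_iff[OF g _ yi(1)] aut_le_iff[OF g yi(1)] pq JX th yi by auto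
    then have "ginv g y \<in> J" using reg_conv[OF R pq(1,2) yi(1)] by blast
    then show ?thesis using yi by (metis imageI)
  qed
  have reg: "h v \<in> g ` J" if th: "u \<in> g ` J" "v \<in> g ` J" "h \<in> G" "h u \<in> g ` J" for u v h
  proof -
    obtain p q where pq: "p \<in> J" "q \<in> J" "u = g p" "v = g q" using th by blast
    obtain r where r: "r \<in> J" "h u = g r" using th by blast
    have k: "ginv g \<circ> h \<circ> g \<in> G" using comp_aut[OF comp_aut[OF ginv_aut[OF g] th(3)] g] .
    have "(ginv g \<circ> h \<circ> g) p \<in> J" using r pq ginv_l[OF g] by simp
    then have "(ginv g \<circ> h \<circ> g) q \<in> J" using blkD[OF reg_blk[OF R] pq(1,2) k] by blast
    then have "g ((ginv g \<circ> h \<circ> g) q) \<in> g ` J" by blast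
    then show ?thesis using pq ginv_r[OF g] by simp
  qed
  have ns: "\<nexists>a. g ` J = {a}"
  proof
    assume "\<exists>a. g ` J = {a}"
    then obtain a where a: "g ` J = {a}" by blast
    obtain p where p: "p \<in> J" using reg_ne[OF R] by blast
    obtain q where q: "q \<in> J" "q \<noteq> p" using prop_two[OF J p] by blast
    have "g p \<in> {a}" "g q \<in> {a}" using a p q by (metis imageI)+
    then have "g p = g q" by simp
    then show False using aut_inj[OF g] p q JX by blast
  qed
  have nX: "g ` J \<noteq> X"
  proof
    assume e: "g ` J = X"
    have "X \<subseteq> J"
    proof
      fix z assume z: "z \<in> X"
      then have "g z \<in> g ` J" using e aut_mem[OF g] by simp
      then obtain j where "j \<in> J" "g z = g j" by blast
      then show "z \<in> J" using aut_inj[OF g z] JX by blast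
    qed
    then show False using J JX unfolding proper_regular_interval_def by blast
  qed
  have c': "\<forall>u\<in>g ` J. \<forall>w\<in>g ` J. \<forall>y\<in>X. le u y \<and> le y w \<longrightarrow> y \<in> g ` J"
    using conv by blast
  have r': "\<forall>u\<in>g ` J. \<forall>v\<in>g ` J. \<forall>h\<in>G. h u \<in> g ` J \<longrightarrow> h v \<in> g ` J"
    using reg by blast
  show ?thesis unfolding proper_regular_interval_def regular_interval_def is_interval_def
    by (intro conjI sub ne c' r' ns nX)
qed

lemma intersect: assumes J1: "proper_regular_interval X le J1" and J2: "proper_regular_interval X le J2"
  and x: "x \<in> J1" "x \<in> J2"
  shows "proper_regular_interval X le (J1 \<inter> J2)"
proof -
  have R1: "regular_interval X le J1" using prop_reg[OF J1] .
  have R2: "regular_interval X le J2" using prop_reg[OF J2] .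
  have X1: "J1 \<subseteq> X" using reg_sub[OF R1] .
  have X2: "J2 \<subseteq> X" using reg_sub[OF R2] .
  obtain y1 where y1: "y1 \<in> J1" "y1 \<noteq> x" using prop_two[OF J1 x(1)] by blast
  obtain y2 where y2: "y2 \<in> J2" "y2 \<noteq> x" using prop_two[OF J2 x(2)] by blast
  obtain a1 where a1: "a1 \<in> J1" "lt a1 x" using blk_noend[OF reg_blk[OF R1] x(1) y1(1)] y1(2) by metis
  obtain a2 where a2: "a2 \<in> J2" "lt a2 x" using blk_noend[OF reg_blk[OF R2] x(2) y2(1)] y2(2) by metis
  have xX: "x \<in> X" using x X1 by blast
  have "\<exists>a\<in>J1 \<inter> J2. a \<noteq> x"
  proof (cases "le a1 a2")
    case True
    then have "a2 \<in> J1" using reg_conv[OF R1 a1(1) x(1)] a2 X2 unfolding lt_def by blast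
    then show ?thesis using a2 unfolding lt_def by blast
  next
    case False
    then have "le a2 a1" using linear a1 a2 X1 X2 by blast
    then have "a1 \<in> J2" using reg_conv[OF R2 a2(1) x(2)] a1 X1 unfolding lt_def by blast
    then show ?thesis using a1 unfolding lt_def by blast
  qed
  then have ns: "\<nexists>a. J1 \<inter> J2 = {a}" using x by (metis IntI singletonD)
  have nX: "J1 \<inter> J2 \<noteq> X" using J1 X1 unfolding proper_regular_interval_def by blast
  have reg: "regular_interval X le (J1 \<inter> J2)"
    unfolding regular_interval_def is_interval_def
  proof (intro conjI ballI impI)
    show "J1 \<inter> J2 \<subseteq> X" using X1 by blast
    show "J1 \<inter> J2 \<noteq> {}" using x by blast
    fix u v y assume "u \<in> J1 \<inter> J2" "v \<in> J1 \<inter> J2" "y \<in> X" "le u y \<and> le y v"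
    then show "y \<in> J1 \<inter> J2" using reg_conv[OF R1] reg_conv[OF R2] by blast
  next
    fix u v g assume "u \<in> J1 \<inter> J2" "v \<in> J1 \<inter> J2" "g \<in> G" "g u \<in> J1 \<inter> J2"
    then show "g v \<in> J1 \<inter> J2" using blkD[OF reg_blk[OF R1]] blkD[OF reg_blk[OF R2]] by blast
  qed
  show ?thesis unfolding proper_regular_interval_def using reg ns nX by blast
qed

lemma cls_mono: assumes K: "regular_interval X le K" and J: "regular_interval X le J" and KJ: "K \<subseteq> J"
  and y: "y \<in> X" shows "cls K y \<subseteq> cls J y"
proof -
  obtain h where h: "h \<in> G" "h y \<in> K" using ex_into[OF K y] by blast
  show ?thesis using cls_eq[OF K h(1) y h(2)] cls_eq[OF J h(1) y] h KJ by auto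
qed

lemma exists_at: assumes ex: "\<exists>J. proper_regular_interval X le J" and x: "x \<in> X"
  shows "\<exists>J. proper_regular_interval X le J \<and> x \<in> J"
proof -
  obtain J where J: "proper_regular_interval X le J" using ex by blast
  obtain j where j: "j \<in> J" using reg_ne[OF prop_reg[OF J]] by blast
  obtain g where g: "g \<in> G" "g j = x" using homog[OF _ x] j reg_sub[OF prop_reg[OF J]] by blast
  show ?thesis using translate[OF J g(1)] g j by blast
qed

lemma sub_chain: assumes K: "K \<subseteq> X" shows "is_chain K le"
proof -
  have 1: "\<forall>x\<in>K. le x x" using lrefl K by blast
  have 2: "\<forall>x\<in>K. \<forall>y\<in>K. le x y \<and> le y x \<longrightarrow> x = y"
  proof (intro ballI impI)
    fix x y assume "x \<in> K" "y \<in> K" "le x y \<and> le y x"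
    then show "x = y" using antisym[of x y] K by blast
  qed
  have 3: "\<forall>x\<in>K. \<forall>y\<in>K. \<forall>z\<in>K. le x y \<and> le y z \<longrightarrow> le x z"
  proof (intro ballI impI)
    fix x y z assume "x \<in> K" "y \<in> K" "z \<in> K" "le x y \<and> le y z"
    then show "le x z" using ltrans[of x y z] K by blast
  qed
  have 4: "\<forall>x\<in>K. \<forall>y\<in>K. le x y \<or> le y x"
  proof (intro ballI)
    fix x y assume "x \<in> K" "y \<in> K"
    then show "le x y \<or> le y x" using linear[of x y] K by blast
  qed
  show ?thesis unfolding is_chain_def using 1 2 3 4 by (intro conjI)
qed

lemma sub_homog: assumes R: "regular_interval X le I" shows "homogeneous I le"
proof -
  have IX: "I \<subseteq> X" using reg_sub[OF R] .
  have "\<exists>r\<in>Aut I le. r x = y" if xy: "x \<in> I" "y \<in> I" for x y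
  proof -
    have xX: "x \<in> X" and yX: "y \<in> X" using xy IX by auto
    obtain g where g: "g \<in> G" "g x = y" using homog[OF xX yX] by blast
    have "g ` I = I" using blk_img[OF reg_blk[OF R] g(1) xy(1)] g(2) xy(2) by simp
    then have r: "(\<lambda>z. if z \<in> I then g z else z) \<in> Aut I le" using blk_restrict[OF IX g(1)] by simp
    have "(\<lambda>z. if z \<in> I then g z else z) x = y" using g xy by simp
    then show ?thesis using r by (rule rev_bexI[rotated])
  qed
  then have "\<forall>x\<in>I. \<forall>y\<in>I. \<exists>r\<in>Aut I le. r x = y" by blast
  then show ?thesis unfolding homogeneous_def using sub_chain[OF IX] by (intro conjI)
qed

lemma small: assumes ex: "\<exists>J. proper_regular_interval X le J"
  and h3: "\<forall>J. proper_regular_interval X le J \<longrightarrow> \<not> simple_chain J le"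
  and x: "x \<in> X" and a: "a \<in> X" "lt a x" and b: "b \<in> X" "lt x b"
  shows "\<exists>J. proper_regular_interval X le J \<and> x \<in> J \<and> J \<subseteq> {z\<in>X. lt a z \<and> lt z b}"
proof -
  define Fam where "Fam = {J. proper_regular_interval X le J \<and> x \<in> J}"
  define I where "I = \<Inter>Fam"
  obtain J0 where J0: "J0 \<in> Fam" using exists_at[OF ex x] unfolding Fam_def by blast
  have FR: "regular_interval X le J" if "J \<in> Fam" for J using that prop_reg unfolding Fam_def by blast
  have xI: "x \<in> I" unfolding I_def Fam_def by blast
  have IJ0: "I \<subseteq> J0" unfolding I_def using J0 by blast
  have IX: "I \<subseteq> X" using IJ0 reg_sub[OF FR[OF J0]] by blast
  show ?thesis
  proof (cases "\<exists>y\<in>I. y \<noteq> x")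
    case True
    have RI: "regular_interval X le I"
      unfolding regular_interval_def is_interval_def
    proof (intro conjI ballI impI)
      show "I \<subseteq> X" using IX .
      show "I \<noteq> {}" using xI by blast
      fix u v y assume "u \<in> I" "v \<in> I" "y \<in> X" "le u y \<and> le y v"
      then show "y \<in> I" unfolding I_def using reg_conv[OF FR] by blast
    next
      fix u v g assume "u \<in> I" "v \<in> I" "g \<in> G" "g u \<in> I"
      then show "g v \<in> I" unfolding I_def using blkD[OF reg_blk[OF FR]] by blast
    qed
    have ns: "\<nexists>c. I = {c}" using True xI by (metis singletonD)
    have nX: "I \<noteq> X" using IJ0 J0 reg_sub[OF FR[OF J0]] unfolding Fam_def proper_regular_interval_def by blast
    have PI: "proper_regular_interval X le I" unfolding proper_regular_interval_def using RI ns nX by blast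
    have "\<not> simple_chain I le" using h3 PI by blast
    then obtain L where L: "proper_regular_interval I le L" unfolding simple_chain_def using sub_homog[OF RI] by blast
    have LI: "L \<subseteq> I" using L unfolding proper_regular_interval_def regular_interval_def is_interval_def by blast
    have LneI: "L \<noteq> I" using L unfolding proper_regular_interval_def by blast
    have Lne: "L \<noteq> {}" using L unfolding proper_regular_interval_def regular_interval_def is_interval_def by blast
    have L1: "regular_interval I le L" using L unfolding proper_regular_interval_def by (elim conjE)
    have Lns: "\<nexists>a. L = {a}" using L unfolding proper_regular_interval_def by (elim conjE)
    have Li: "is_interval I le L" using L1 unfolding regular_interval_def by (elim conjE)
    have Lrg: "\<forall>x\<in>L. \<forall>y\<in>L. \<forall>g\<in>Aut I le. g x \<in> L \<longrightarrow> g y \<in> L"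
      using L1 unfolding regular_interval_def by (elim conjE)
    have Lc: "\<forall>x\<in>L. \<forall>z\<in>L. \<forall>y\<in>I. le x y \<and> le y z \<longrightarrow> y \<in> L" using Li unfolding is_interval_def by blast
    have Lconv: "y \<in> L" if th: "u \<in> L" "v \<in> L" "y \<in> I" "le u y" "le y v" for u v y
      using Lc th by blast
    have Lreg: "r v \<in> L" if th: "u \<in> L" "v \<in> L" "r \<in> Aut I le" "r u \<in> L" for u v r
      using Lrg th by blast
    have RL: "regular_interval X le L"
      unfolding regular_interval_def is_interval_def
    proof (intro conjI ballI impI)
      show "L \<subseteq> X" using LI IX by blast
      show "L \<noteq> {}" using Lne .
      fix u v y assume uv: "u \<in> L" "v \<in> L" "y \<in> X" "le u y \<and> le y v"
      then have "y \<in> I" using reg_conv[OF RI] LI by blast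
      then show "y \<in> L" using Lconv uv by blast
    next
      fix u v g assume uv: "u \<in> L" "v \<in> L" "g \<in> G" "g u \<in> L"
      have "g ` I = I" using blk_img[OF reg_blk[OF RI] uv(3)] uv LI by blast
      then have r: "(\<lambda>z. if z \<in> I then g z else z) \<in> Aut I le" using blk_restrict[OF IX uv(3)] by blast
      have "(\<lambda>z. if z \<in> I then g z else z) v \<in> L" using Lreg[OF uv(1,2) r] uv LI by auto
      then show "g v \<in> L" using uv LI by auto
    qed
    have LnX: "L \<noteq> X"
    proof
      assume "L = X"
      then have "X \<subseteq> I" using LI by simp
      then show False using subset_antisym[OF IX] nX by simp
    qed
    have PL: "proper_regular_interval X le L"
      unfolding proper_regular_interval_def by (rule conjI[OF RL conjI[OF Lns LnX]])
    obtain l where l: "l \<in> L" using Lne by blast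
    have lX: "l \<in> X" using l LI IX by blast
    obtain g where g: "g \<in> G" "g l = x" using homog[OF lX x] by blast
    have xgL: "x \<in> g ` L" using l g(2) by (metis imageI)
    have "g ` L \<in> Fam" unfolding Fam_def mem_Collect_eq by (rule conjI[OF translate[OF PL g(1)] xgL])
    then have IM: "I \<subseteq> g ` L" unfolding I_def by (rule Inter_lower)
    have lI: "l \<in> I" using l LI by blast
    have gI: "g ` I = I" using blk_img[OF reg_blk[OF RI] g(1) lI] g(2) xI by simp
    have "g ` L \<subseteq> g ` I" using LI by (rule image_mono)
    then have e: "g ` L = g ` I" using IM gI by simp
    have inj: "inj_on g X" using aut_bij[OF g(1)] bij_betw_imp_inj_on by blast
    have "L = I" using inj_on_image_eq_iff[OF inj] LI IX e by blast
    then show ?thesis using LneI by blast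
  next
    case False
    then have Ix: "I \<subseteq> {x}" by blast
    have "a \<notin> I" using Ix a unfolding lt_def by blast
    then obtain J1 where J1: "J1 \<in> Fam" "a \<notin> J1" unfolding I_def by blast
    have "b \<notin> I" using Ix b unfolding lt_def by blast
    then obtain J2 where J2: "J2 \<in> Fam" "b \<notin> J2" unfolding I_def by blast
    have P1: "proper_regular_interval X le J1" "x \<in> J1" using J1 unfolding Fam_def by auto
    have P2: "proper_regular_interval X le J2" "x \<in> J2" using J2 unfolding Fam_def by auto
    have PK: "proper_regular_interval X le (J1 \<inter> J2)" using intersect[OF P1(1) P2(1) P1(2) P2(2)] .
    have RK: "regular_interval X le (J1 \<inter> J2)" using prop_reg[OF PK] .
    have KX: "J1 \<inter> J2 \<subseteq> X" using reg_sub[OF RK] .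
    have "J1 \<inter> J2 \<subseteq> {z\<in>X. lt a z \<and> lt z b}"
    proof
      fix z assume z: "z \<in> J1 \<inter> J2"
      have zX: "z \<in> X" using z KX by blast
      have "lt a z"
      proof (rule ccontr)
        assume "\<not> lt a z"
        then have "le z a \<or> a = z" using linear[OF zX a(1)] unfolding lt_def by blast
        then have "a \<in> J1 \<inter> J2"
        proof
          assume za: "le z a"
          have "le a x" using a(2) unfolding lt_def by blast
          then show ?thesis using reg_conv[OF RK z _ a(1) za] P1(2) P2(2) by blast
        qed (use z in blast)
        then show False using J1 by blast
      qed
      moreover have "lt z b"
      proof (rule ccontr)
        assume "\<not> lt z b"
        then have "le b z \<or> b = z" using linear[OF zX b(1)] unfolding lt_def by blast
        then have "b \<in> J1 \<inter> J2"
        proof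
          assume za: "le b z"
          have "le x b" using b(2) unfolding lt_def by blast
          then show ?thesis using reg_conv[OF RK _ z b(1) _ za] P1(2) P2(2) by blast
        qed (use z in blast)
        then show False using J2 by blast
      qed
      ultimately show "z \<in> {z\<in>X. lt a z \<and> lt z b}" using zX by blast
    qed
    then show ?thesis using PK P1(2) P2(2) by blast
  qed
qed

lemma le_lt_trans: "x \<in> X \<Longrightarrow> y \<in> X \<Longrightarrow> z \<in> X \<Longrightarrow> le x y \<Longrightarrow> lt y z \<Longrightarrow> lt x z"
  unfolding lt_def using ltrans antisym by metis
lemma lt_le_trans: "x \<in> X \<Longrightarrow> y \<in> X \<Longrightarrow> z \<in> X \<Longrightarrow> lt x y \<Longrightarrow> le y z \<Longrightarrow> lt x z"
  unfolding lt_def using ltrans antisym by metis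

definition "Iv a b = {z\<in>X. lt a z \<and> lt z b}"

lemma blkX: "blk X" unfolding blk_def using aut_mem by blast

lemma ord_open: assumes two: "\<forall>x\<in>X. \<exists>y\<in>X. y \<noteq> x"
  and V: "generate_topology_on (insert X ((\<lambda>a. {y\<in>X. le y a \<and> y \<noteq> a}) ` X \<union> (\<lambda>a. {y\<in>X. le a y \<and> y \<noteq> a}) ` X)) V"
  shows "\<forall>x\<in>V. x \<in> X \<longrightarrow> (\<exists>a\<in>X. \<exists>b\<in>X. lt a x \<and> lt x b \<and> Iv a b \<subseteq> V)"
  using V
proof induct
  case Empty
  then show ?case by blast
next
  case (Int A B)
  show ?case
  proof (intro ballI impI)
    fix x assume x: "x \<in> A \<inter> B" "x \<in> X"
    obtain a1 b1 where 1: "a1 \<in> X" "b1 \<in> X" "lt a1 x" "lt x b1" "Iv a1 b1 \<subseteq> A" using Int.hyps(2) x by blast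
    obtain a2 b2 where 2: "a2 \<in> X" "b2 \<in> X" "lt a2 x" "lt x b2" "Iv a2 b2 \<subseteq> B" using Int.hyps(4) x by blast
    obtain a where a: "a \<in> X" "lt a x" "le a1 a" "le a2 a"
      using linear[OF 1(1) 2(1)] lrefl 1 2 by blast
    obtain b where b: "b \<in> X" "lt x b" "le b b1" "le b b2"
      using linear[OF 1(2) 2(2)] lrefl 1 2 by blast
    have "Iv a b \<subseteq> Iv a1 b1" "Iv a b \<subseteq> Iv a2 b2"
      unfolding Iv_def using le_lt_trans lt_le_trans a b 1 2 by blast+
    then show "\<exists>a\<in>X. \<exists>b\<in>X. lt a x \<and> lt x b \<and> Iv a b \<subseteq> A \<inter> B" using a b 1 2 by blast
  qed
next
  case (UN K)
  show ?case
  proof (intro ballI impI)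
    fix x assume x: "x \<in> \<Union>K" "x \<in> X"
    then obtain k where k: "k \<in> K" "x \<in> k" by blast
    then obtain a b where "a \<in> X" "b \<in> X" "lt a x" "lt x b" "Iv a b \<subseteq> k" using UN.hyps k x by blast
    then show "\<exists>a\<in>X. \<exists>b\<in>X. lt a x \<and> lt x b \<and> Iv a b \<subseteq> \<Union>K" using k by blast
  qed
next
  case (Basis s)
  show ?case
  proof (intro ballI impI)
    fix x assume x: "x \<in> s" "x \<in> X"
    obtain y where y: "y \<in> X" "y \<noteq> x" using two x by blast
    obtain a b where ab: "a \<in> X" "b \<in> X" "lt a x" "lt x b" using blk_noend[OF blkX x(2) y(1) y(2)[symmetric]] by blast
    consider "s = X" | c where "c \<in> X" "s = {y\<in>X. le y c \<and> y \<noteq> c}" | c where "c \<in> X" "s = {y\<in>X. le c y \<and> y \<noteq> c}"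
      using Basis by blast
    then show "\<exists>a\<in>X. \<exists>b\<in>X. lt a x \<and> lt x b \<and> Iv a b \<subseteq> s"
    proof cases
      case 1
      then show ?thesis using ab unfolding Iv_def by blast
    next
      case (2 c)
      then have "lt x c" using x unfolding lt_def by blast
      moreover have "Iv a c \<subseteq> s" using 2 unfolding Iv_def lt_def by blast
      ultimately show ?thesis using ab 2 by blast
    next
      case (3 c)
      then have "lt c x" using x unfolding lt_def by blast
      moreover have "Iv c b \<subseteq> s" using 3 unfolding Iv_def lt_def by blast
      ultimately show ?thesis using ab 3 by blast
    qed
  qed
qed

lemma pw_open:
  assumes "generate_topology_on (insert G {{g\<in>G. g x \<in> V} | x V. x \<in> X \<and> openin (order_topology_on X le) V}) W"
  shows "id \<in> W \<longrightarrow> (\<exists>P. finite P \<and> (\<forall>p\<in>P. fst p \<in> X \<and> openin (order_topology_on X le) (snd p) \<and> fst p \<in> snd p)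
            \<and> {g\<in>G. \<forall>p\<in>P. g (fst p) \<in> snd p} \<subseteq> W)"
  using assms
proof induct
  case Empty
  then show ?case by blast
next
  case (Int A B)
  show ?case
  proof
    assume "id \<in> A \<inter> B"
    then have iA: "id \<in> A" and iB: "id \<in> B" by auto
    obtain P1 where P1: "finite P1" "\<forall>p\<in>P1. fst p \<in> X \<and> openin (order_topology_on X le) (snd p) \<and> fst p \<in> snd p"
      "{g\<in>G. \<forall>p\<in>P1. g (fst p) \<in> snd p} \<subseteq> A" using Int.hyps(2) iA by blast
    obtain P2 where P2: "finite P2" "\<forall>p\<in>P2. fst p \<in> X \<and> openin (order_topology_on X le) (snd p) \<and> fst p \<in> snd p"
      "{g\<in>G. \<forall>p\<in>P2. g (fst p) \<in> snd p} \<subseteq> B" using Int.hyps(4) iB by blast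
    have f: "finite (P1 \<union> P2)" using P1(1) P2(1) by simp
    have h: "\<forall>p\<in>P1 \<union> P2. fst p \<in> X \<and> openin (order_topology_on X le) (snd p) \<and> fst p \<in> snd p"
      using P1(2) P2(2) by blast
    have s: "{g\<in>G. \<forall>p\<in>P1 \<union> P2. g (fst p) \<in> snd p} \<subseteq> A \<inter> B"
      using P1(3) P2(3) by blast
    show "\<exists>P. finite P \<and> (\<forall>p\<in>P. fst p \<in> X \<and> openin (order_topology_on X le) (snd p) \<and> fst p \<in> snd p)
            \<and> {g\<in>G. \<forall>p\<in>P. g (fst p) \<in> snd p} \<subseteq> A \<inter> B"
      using f h s by blast
  qed
next
  case (UN K)
  show ?case
  proof
    assume "id \<in> \<Union>K"
    then obtain k where k: "k \<in> K" "id \<in> k" by blast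
    have "id \<in> k \<longrightarrow> (\<exists>P. finite P \<and> (\<forall>p\<in>P. fst p \<in> X \<and> openin (order_topology_on X le) (snd p) \<and> fst p \<in> snd p)
            \<and> {g\<in>G. \<forall>p\<in>P. g (fst p) \<in> snd p} \<subseteq> k)" using UN k(1) by blast
    then obtain P where P: "finite P" "\<forall>p\<in>P. fst p \<in> X \<and> openin (order_topology_on X le) (snd p) \<and> fst p \<in> snd p"
      "{g\<in>G. \<forall>p\<in>P. g (fst p) \<in> snd p} \<subseteq> k" using k(2) by blast
    have "{g\<in>G. \<forall>p\<in>P. g (fst p) \<in> snd p} \<subseteq> \<Union>K" using P(3) k(1) by blast
    then show "\<exists>P. finite P \<and> (\<forall>p\<in>P. fst p \<in> X \<and> openin (order_topology_on X le) (snd p) \<and> fst p \<in> snd p)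
            \<and> {g\<in>G. \<forall>p\<in>P. g (fst p) \<in> snd p} \<subseteq> \<Union>K" using P(1,2) by blast
  qed
next
  case (Basis s)
  show ?case
  proof
    assume ids: "id \<in> s"
    show "\<exists>P. finite P \<and> (\<forall>p\<in>P. fst p \<in> X \<and> openin (order_topology_on X le) (snd p) \<and> fst p \<in> snd p)
            \<and> {g\<in>G. \<forall>p\<in>P. g (fst p) \<in> snd p} \<subseteq> s"
    proof (cases "s = G")
      case True
      then show ?thesis by (intro exI[of _ "{}"]) auto
    next
      case False
      then have "s \<in> {{g\<in>G. g x \<in> V} | x V. x \<in> X \<and> openin (order_topology_on X le) V}"
        using Basis by simp
      then obtain x V where xV: "s = {g\<in>G. g x \<in> V}" "x \<in> X" "openin (order_topology_on X le) V"
        by blast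
      then have "x \<in> V" using ids by simp
      have "{g\<in>G. \<forall>p\<in>{(x,V)}. g (fst p) \<in> snd p} \<subseteq> s" using xV(1) by simp
      then show ?thesis using xV \<open>x \<in> V\<close> by (intro exI[of _ "{(x, V)}"]) simp
    qed
  qed
qed

lemma exJ: assumes ex: "\<exists>J. proper_regular_interval X le J"
  and h3: "\<forall>J. proper_regular_interval X le J \<longrightarrow> \<not> simple_chain J le"
  and two: "\<forall>x\<in>X. \<exists>y\<in>X. y \<noteq> x"
  and fin: "finite P"
  shows "(\<forall>p\<in>P. fst p \<in> X \<and> openin (order_topology_on X le) (snd p) \<and> fst p \<in> snd p) \<longrightarrow>
    (\<exists>J. proper_regular_interval X le J \<and> (\<forall>p\<in>P. cls J (fst p) \<subseteq> snd p))"
  using fin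
proof induct
  case empty
  then show ?case using ex by blast
next
  case (insert p P)
  show ?case
  proof
    assume H: "\<forall>p\<in>insert p P. fst p \<in> X \<and> openin (order_topology_on X le) (snd p) \<and> fst p \<in> snd p"
    then have "\<forall>p\<in>P. fst p \<in> X \<and> openin (order_topology_on X le) (snd p) \<and> fst p \<in> snd p" by blast
    then obtain J where J: "proper_regular_interval X le J" "\<forall>q\<in>P. cls J (fst q) \<subseteq> snd q"
      using insert.hyps(3) by blast
    have RJ: "regular_interval X le J" using prop_reg[OF J(1)] .
    define x where "x = fst p"
    define V where "V = snd p"
    have x: "x \<in> X" and Vo: "openin (order_topology_on X le) V" and xV: "x \<in> V"
      using H unfolding x_def V_def by auto
    have "generate_topology_on (insert X ((\<lambda>a. {y\<in>X. le y a \<and> y \<noteq> a}) ` X \<union> (\<lambda>a. {y\<in>X. le a y \<and> y \<noteq> a}) ` X)) V"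
      using Vo unfolding order_topology_on_def openin_topology_generated_by_iff .
    then obtain a b where ab: "a \<in> X" "b \<in> X" "lt a x" "lt x b" "Iv a b \<subseteq> V"
      using ord_open[OF two] x xV by blast
    obtain Jx where Jx: "proper_regular_interval X le Jx" "x \<in> Jx" "Jx \<subseteq> {z\<in>X. lt a z \<and> lt z b}"
      using small[OF ex h3 x ab(1,3) ab(2,4)] by blast
    have JxV: "Jx \<subseteq> V" using Jx(3) ab(5) unfolding Iv_def by blast
    have JxX: "Jx \<subseteq> X" using reg_sub[OF prop_reg[OF Jx(1)]] .
    obtain j where j: "j \<in> J" using reg_ne[OF RJ] by blast
    have jX: "j \<in> X" using j reg_sub[OF RJ] by blast
    obtain g where g: "g \<in> G" "g x = j" using homog[OF x jX] by blast
    have PM: "proper_regular_interval X le (g ` Jx)" using translate[OF Jx(1) g(1)] .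
    have RM: "regular_interval X le (g ` Jx)" using prop_reg[OF PM] .
    have jM: "j \<in> g ` Jx" using Jx(2) g(2) by (metis imageI)
    have PK: "proper_regular_interval X le (J \<inter> g ` Jx)" using intersect[OF J(1) PM j jM] .
    have RK: "regular_interval X le (J \<inter> g ` Jx)" using prop_reg[OF PK] .
    have c1: "\<forall>q\<in>P. cls (J \<inter> g ` Jx) (fst q) \<subseteq> snd q"
    proof
      fix q assume q: "q \<in> P"
      have "fst q \<in> X" using H q by blast
      then have "cls (J \<inter> g ` Jx) (fst q) \<subseteq> cls J (fst q)" using cls_mono[OF RK RJ] by blast
      then show "cls (J \<inter> g ` Jx) (fst q) \<subseteq> snd q" using J(2) q by blast
    qed
    have "cls (J \<inter> g ` Jx) x \<subseteq> cls (g ` Jx) x" using cls_mono[OF RK RM _ x] by blast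
    also have "cls (g ` Jx) x = {z\<in>X. g z \<in> g ` Jx}" using cls_eq[OF RM g(1) x] g(2) jM by simp
    also have "\<dots> \<subseteq> Jx"
    proof
      fix z assume z: "z \<in> {z\<in>X. g z \<in> g ` Jx}"
      then obtain w where w: "w \<in> Jx" "g z = g w" by blast
      then show "z \<in> Jx" using aut_inj[OF g(1)] z JxX by blast
    qed
    finally have c2: "cls (J \<inter> g ` Jx) (fst p) \<subseteq> snd p" using JxV unfolding x_def V_def by blast
    show "\<exists>J. proper_regular_interval X le J \<and> (\<forall>p\<in>insert p P. cls J (fst p) \<subseteq> snd p)"
      using PK c1 c2 by blast
  qed
qed

lemma Iv_open: assumes "a \<in> X" "b \<in> X" shows "openin (order_topology_on X le) (Iv a b)"
proof -
  let ?S = "insert X ((\<lambda>a. {y\<in>X. le y a \<and> y \<noteq> a}) ` X \<union> (\<lambda>a. {y\<in>X. le a y \<and> y \<noteq> a}) ` X)"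
  have "Iv a b = {y\<in>X. le a y \<and> y \<noteq> a} \<inter> {y\<in>X. le y b \<and> y \<noteq> b}" unfolding Iv_def lt_def by blast
  moreover have "generate_topology_on ?S {y\<in>X. le a y \<and> y \<noteq> a}" using assms by (intro generate_topology_on.Basis) blast
  moreover have "generate_topology_on ?S {y\<in>X. le y b \<and> y \<noteq> b}" using assms by (intro generate_topology_on.Basis) blast
  ultimately show ?thesis unfolding order_topology_on_def openin_topology_generated_by_iff
    by (simp add: generate_topology_on.Int)
qed

lemma gto_fin_inter: assumes "finite F" shows "generate_topology_on S A \<longrightarrow> (\<forall>C\<in>F. generate_topology_on S (B C)) \<longrightarrow>
  generate_topology_on S (A \<inter> \<Inter>(B ` F))"
  using assms
proof induct
  case empty
  then show ?case by simp
next
  case (insert c F)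
  have e: "A \<inter> \<Inter>(B ` insert c F) = (A \<inter> \<Inter>(B ` F)) \<inter> B c" by blast
  show ?case unfolding e using insert.hyps(3) by (auto intro: generate_topology_on.Int)
qed

lemma fwd: assumes RP: "roelcke_precompact G (nhds_id_p X le)"
  and PJ: "proper_regular_interval X le J"
  shows "roelcke_precompact (Aut (Q J) (quot_le le)) (nhds_id_perm (Q J) (quot_le le))"
  unfolding roelcke_precompact_def
proof
  let ?A = "Aut (Q J) (quot_le le)"
  have RJ: "regular_interval X le J" using prop_reg[OF PJ] .
  have nsJ: "\<nexists>a. J = {a}" using PJ unfolding proper_regular_interval_def by blast
  fix U assume "U \<in> nhds_id_perm (Q J) (quot_le le)"
  then obtain F where U: "U \<subseteq> ?A" and F: "finite F" "F \<subseteq> Q J" "{g\<in>?A. \<forall>x\<in>F. g x = x} \<subseteq> U"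
    unfolding nhds_id_perm_def by blast
  have ch: "\<exists>t. fst t \<in> C \<and> fst (snd t) \<in> X \<and> snd (snd t) \<in> X \<and> lt (fst (snd t)) (fst t) \<and>
      lt (fst t) (snd (snd t)) \<and> Iv (fst (snd t)) (snd (snd t)) \<subseteq> C" if C: "C \<in> F" for C
  proof -
    obtain y where y: "y \<in> X" "C = cls J y" using C F(2) Q_iff by blast
    have yC: "y \<in> C" using cls_self[OF RJ y(1)] y(2) by simp
    obtain z where z: "z \<in> cls J y" "z \<noteq> y" using cls_two[OF RJ nsJ y(1)] by blast
    obtain a b where ab: "a \<in> cls J y" "b \<in> cls J y" "lt a y" "lt y b"
      using blk_noend[OF cls_blk[OF RJ y(1)] cls_self[OF RJ y(1)] z(1)] z(2) by metis
    have abX: "a \<in> X" "b \<in> X" using ab(1,2) cls_sub by auto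
    have "Iv a b \<subseteq> C"
    proof
      fix w assume "w \<in> Iv a b"
      then have w: "w \<in> X" "le a w" "le w b" unfolding Iv_def lt_def by auto
      show "w \<in> C" using cls_conv[OF RJ y(1) ab(1,2) w] y(2) by simp
    qed
    then show ?thesis using yC abX ab(3,4) by (intro exI[of _ "(y, a, b)"]) simp
  qed
  have ch': "\<forall>C\<in>F. \<exists>t. fst t \<in> C \<and> fst (snd t) \<in> X \<and> snd (snd t) \<in> X \<and> lt (fst (snd t)) (fst t) \<and>
      lt (fst t) (snd (snd t)) \<and> Iv (fst (snd t)) (snd (snd t)) \<subseteq> C" using ch by (intro ballI)
  obtain t where t: "\<forall>C\<in>F. fst (t C) \<in> C \<and> fst (snd (t C)) \<in> X \<and> snd (snd (t C)) \<in> X \<and> lt (fst (snd (t C))) (fst (t C)) \<and>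
      lt (fst (t C)) (snd (snd (t C))) \<and> Iv (fst (snd (t C))) (snd (snd (t C))) \<subseteq> C"
    using bchoice[OF ch'] by (elim exE)
  have t1: "fst (t C) \<in> C" and t2: "fst (snd (t C)) \<in> X" and t3: "snd (snd (t C)) \<in> X"
    and t4: "lt (fst (snd (t C))) (fst (t C))" and t5: "lt (fst (t C)) (snd (snd (t C)))"
    and t6: "Iv (fst (snd (t C))) (snd (snd (t C))) \<subseteq> C" if C: "C \<in> F" for C
    using bspec[OF t C] by simp_all
  define B where "B C = {g\<in>G. g (fst (t C)) \<in> Iv (fst (snd (t C))) (snd (snd (t C)))}" for C
  define W where "W = G \<inter> \<Inter>(B ` F)"
  let ?S = "insert G {{g\<in>G. g x \<in> V} | x V. x \<in> X \<and> openin (order_topology_on X le) V}"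
  have tX: "fst (t C) \<in> X" if C: "C \<in> F" for C
  proof -
    have "C \<subseteq> X" using Q_sub C F(2) by blast
    then show ?thesis using t1[OF C] by blast
  qed
  have gB: "\<forall>C\<in>F. generate_topology_on ?S (B C)"
  proof
    fix C assume C: "C \<in> F"
    have "openin (order_topology_on X le) (Iv (fst (snd (t C))) (snd (snd (t C))))"
      using Iv_open[OF t2[OF C] t3[OF C]] .
    then have "B C \<in> {{g\<in>G. g x \<in> V} | x V. x \<in> X \<and> openin (order_topology_on X le) V}"
      unfolding B_def using tX[OF C]
      by (intro CollectI exI[of _ "fst (t C)"] exI[of _ "Iv (fst (snd (t C))) (snd (snd (t C)))"] conjI refl)
    then show "generate_topology_on ?S (B C)" by (intro generate_topology_on.Basis insertI2)
  qed
  have gG: "generate_topology_on ?S G" by (intro generate_topology_on.Basis insertI1)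
  have oW: "openin (pointwise_topology X le) W"
    unfolding pointwise_topology_def openin_topology_generated_by_iff W_def
    using gto_fin_inter[OF F(1), of ?S G B] gG gB by (elim impE)
  have idB: "id \<in> B C" if C: "C \<in> F" for C
  proof -
    have "id (fst (t C)) \<in> Iv (fst (snd (t C))) (snd (snd (t C)))"
      unfolding Iv_def using tX[OF C] t4[OF C] t5[OF C] by simp
    then show ?thesis unfolding B_def using id_aut by blast
  qed
  have idW: "id \<in> W" unfolding W_def using id_aut idB by blast
  have WG: "W \<subseteq> G" unfolding W_def by blast
  have WN: "W \<in> nhds_id_p X le" unfolding nhds_id_p_def
    by (intro CollectI conjI WG exI[of _ W] oW idW subset_refl)
  have "\<exists>F. finite F \<and> F \<subseteq> G \<and> G \<subseteq> (\<Union>f\<in>F. roelcke_entourage G W `` {f})"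
    using RP WN unfolding roelcke_precompact_def by (rule bspec)
  then obtain F' where F': "finite F'" "F' \<subseteq> G" "G \<subseteq> (\<Union>f\<in>F'. roelcke_entourage G W `` {f})"
    by (elim exE conjE)
  have Wfix: "hat J u \<in> U" if u: "u \<in> W" for u
  proof -
    have uG: "u \<in> G" using u WG by blast
    have "hat J u C = C" if C: "C \<in> F" for C
    proof -
      let ?x = "fst (t C)"
      have xC: "?x \<in> C" using t1[OF C] .
      have "u \<in> B C" using u C unfolding W_def by blast
      then have "u ?x \<in> Iv (fst (snd (t C))) (snd (snd (t C)))" unfolding B_def by blast
      then have uxC: "u ?x \<in> C" using t6[OF C] by blast
      obtain y where y: "y \<in> X" "C = cls J y" using C F(2) Q_iff by blast
      have Cx: "C = cls J ?x" using cls_same[OF RJ y(1)] xC y(2) by simp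
      have "u ` C = cls J (u ?x)" using cls_img[OF RJ uG tX[OF C]] Cx by simp
      also have "\<dots> = C" using cls_same[OF RJ tX[OF C]] uxC Cx by simp
      finally show ?thesis using hat_in[OF RJ uG] C F(2) by auto
    qed
    then show ?thesis using F(3) hat_aut[OF RJ uG] by blast
  qed
  show "\<exists>F. finite F \<and> F \<subseteq> ?A \<and> ?A \<subseteq> (\<Union>f\<in>F. roelcke_entourage ?A U `` {f})"
  proof (intro exI[of _ "hat J ` F'"] conjI)
    show "finite (hat J ` F')" using F'(1) by simp
    show "hat J ` F' \<subseteq> ?A" using hat_aut[OF RJ] F'(2) by blast
    show "?A \<subseteq> (\<Union>f\<in>hat J ` F'. roelcke_entourage ?A U `` {f})"
    proof
      fix \<phi> assume phi: "\<phi> \<in> ?A"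
      obtain L where L: "L \<in> G" "hat J L = \<phi>" using lift[OF RJ phi] by blast
      then obtain f where f: "f \<in> F'" "(f, L) \<in> roelcke_entourage G W" using F'(3) by blast
      then obtain u v where uv: "u \<in> W" "v \<in> W" "L = u \<circ> f \<circ> v"
        unfolding roelcke_entourage_def by blast
      have uG: "u \<in> G" and vG: "v \<in> G" and fG: "f \<in> G" using uv WG f F'(2) by auto
      have "\<phi> = hat J u \<circ> hat J f \<circ> hat J v"
        using L(2) uv(3) hat_comp[OF RJ comp_aut[OF uG fG] vG] hat_comp[OF RJ uG fG] by simp
      then have "(hat J f, \<phi>) \<in> roelcke_entourage ?A U"
        unfolding roelcke_entourage_def using Wfix uv(1,2) hat_aut[OF RJ fG] phi by blast
      then show "\<phi> \<in> (\<Union>f\<in>hat J ` F'. roelcke_entourage ?A U `` {f})" using f(1) by blast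
    qed
  qed
qed

lemma bwd: assumes ex: "\<exists>J. proper_regular_interval X le J"
  and h3: "\<forall>J. proper_regular_interval X le J \<longrightarrow> \<not> simple_chain J le"
  and two: "\<forall>x\<in>X. \<exists>y\<in>X. y \<noteq> x"
  and RQ: "\<forall>J. proper_regular_interval X le J \<longrightarrow>
       roelcke_precompact (Aut (Q J) (quot_le le)) (nhds_id_perm (Q J) (quot_le le))"
  shows "roelcke_precompact G (nhds_id_p X le)"
  unfolding roelcke_precompact_def
proof
  fix U assume "U \<in> nhds_id_p X le"
  then obtain W where UG: "U \<subseteq> G" and W: "openin (pointwise_topology X le) W" "id \<in> W" "W \<subseteq> U"
    unfolding nhds_id_p_def by blast
  have gW: "generate_topology_on (insert G {{g\<in>G. g x \<in> V} | x V. x \<in> X \<and> openin (order_topology_on X le) V}) W"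
    using W(1) unfolding pointwise_topology_def openin_topology_generated_by_iff .
  have "\<exists>P. finite P \<and> (\<forall>p\<in>P. fst p \<in> X \<and> openin (order_topology_on X le) (snd p) \<and> fst p \<in> snd p)
            \<and> {g\<in>G. \<forall>p\<in>P. g (fst p) \<in> snd p} \<subseteq> W" using mp[OF pw_open[OF gW] W(2)] .
  then obtain P where P: "finite P" "\<forall>p\<in>P. fst p \<in> X \<and> openin (order_topology_on X le) (snd p) \<and> fst p \<in> snd p"
    "{g\<in>G. \<forall>p\<in>P. g (fst p) \<in> snd p} \<subseteq> W" by (elim exE conjE)
  have "\<exists>J. proper_regular_interval X le J \<and> (\<forall>p\<in>P. cls J (fst p) \<subseteq> snd p)"
    using exJ[OF ex h3 two P(1)] P(2) by (elim impE)
  then obtain J where PJ: "proper_regular_interval X le J" and JP: "\<forall>p\<in>P. cls J (fst p) \<subseteq> snd p"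
    by (elim exE conjE)
  have RJ: "regular_interval X le J" using prop_reg[OF PJ] .
  let ?A = "Aut (Q J) (quot_le le)"
  define F where "F = (\<lambda>p. cls J (fst p)) ` P"
  have FQ: "F \<subseteq> Q J" unfolding F_def using P(2) Q_iff by blast
  have Ff: "finite F" unfolding F_def using P(1) by simp
  define Stab where "Stab = {\<phi>\<in>?A. \<forall>C\<in>F. \<phi> C = C}"
  have SN: "Stab \<in> nhds_id_perm (Q J) (quot_le le)" unfolding nhds_id_perm_def Stab_def
    by (intro CollectI conjI exI[of _ F] Ff FQ subset_refl) blast
  have "roelcke_precompact ?A (nhds_id_perm (Q J) (quot_le le))" using RQ PJ by blast
  then have "\<exists>Fh. finite Fh \<and> Fh \<subseteq> ?A \<and> ?A \<subseteq> (\<Union>f\<in>Fh. roelcke_entourage ?A Stab `` {f})"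
    using SN unfolding roelcke_precompact_def by (rule bspec)
  then obtain Fh where Fh: "finite Fh" "Fh \<subseteq> ?A" "?A \<subseteq> (\<Union>f\<in>Fh. roelcke_entourage ?A Stab `` {f})"
    by (elim exE conjE)
  define Lf where "Lf \<phi> = (SOME L. L \<in> G \<and> hat J L = \<phi>)" for \<phi>
  have Lf: "Lf \<phi> \<in> G" "hat J (Lf \<phi>) = \<phi>" if "\<phi> \<in> ?A" for \<phi>
  proof -
    have "\<exists>L. L \<in> G \<and> hat J L = \<phi>" using lift[OF RJ that] by blast
    then have "Lf \<phi> \<in> G \<and> hat J (Lf \<phi>) = \<phi>" unfolding Lf_def by (rule someI_ex)
    then show "Lf \<phi> \<in> G" "hat J (Lf \<phi>) = \<phi>" by simp_all
  qed
  have Ufix: "u \<in> U" if u: "u \<in> G" "\<forall>C\<in>F. hat J u C = C" for u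
  proof -
    have "u (fst p) \<in> snd p" if p: "p \<in> P" for p
    proof -
      have x: "fst p \<in> X" using P(2) p by blast
      have CF: "cls J (fst p) \<in> F" unfolding F_def using p by blast
      have CQ: "cls J (fst p) \<in> Q J" using CF FQ by blast
      have "u (fst p) \<in> u ` cls J (fst p)" using cls_self[OF RJ x] by blast
      also have "u ` cls J (fst p) = cls J (fst p)" using hat_in[OF RJ u(1) CQ] u(2) CF by simp
      finally show ?thesis using JP p by blast
    qed
    then have "u \<in> {g\<in>G. \<forall>p\<in>P. g (fst p) \<in> snd p}" using u(1) by blast
    then show ?thesis using P(3) W(3) by blast
  qed
  show "\<exists>F. finite F \<and> F \<subseteq> G \<and> G \<subseteq> (\<Union>f\<in>F. roelcke_entourage G U `` {f})"
  proof (intro exI[of _ "Lf ` Fh"] conjI)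
    show "finite (Lf ` Fh)" using Fh(1) by simp
    show "Lf ` Fh \<subseteq> G" using Lf(1) Fh(2) by blast
    show "G \<subseteq> (\<Union>f\<in>Lf ` Fh. roelcke_entourage G U `` {f})"
    proof
      fix g assume g: "g \<in> G"
      have hg: "hat J g \<in> ?A" using hat_aut[OF RJ g] .
      then obtain fh where fh: "fh \<in> Fh" "(fh, hat J g) \<in> roelcke_entourage ?A Stab" using Fh(3) by blast
      then obtain \<psi> kk where pc: "\<psi> \<in> Stab" "kk \<in> Stab" "hat J g = \<psi> \<circ> fh \<circ> kk"
        unfolding roelcke_entourage_def by blast
      have fhA: "fh \<in> ?A" using fh(1) Fh(2) by blast
      have psA: "\<psi> \<in> ?A" using pc(1) unfolding Stab_def by blast
      define fL where "fL = Lf fh"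
      define u where "u = Lf \<psi>"
      have fLG: "fL \<in> G" and hfL: "hat J fL = fh" unfolding fL_def using Lf[OF fhA] by auto
      have uG: "u \<in> G" and hu: "hat J u = \<psi>" unfolding u_def using Lf[OF psA] by auto
      define uf where "uf = u \<circ> fL"
      have ufG: "uf \<in> G" unfolding uf_def using comp_aut[OF uG fLG] .
      define v where "v = ginv uf \<circ> g"
      have vG: "v \<in> G" unfolding v_def using comp_aut[OF ginv_aut[OF ufG] g] .
      have uU: "u \<in> U" using Ufix[OF uG] hu pc(1) unfolding Stab_def by blast
      have "hat J v C = C" if C: "C \<in> F" for C
      proof -
        have CQ: "C \<in> Q J" using C FQ by blast
        have "g ` C = hat J g C" using hat_in[OF RJ g CQ] by simp
        also have "\<dots> = \<psi> (fh (kk C))" using pc(3) by simp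
        also have "\<dots> = \<psi> (fh C)" using pc(2) C unfolding Stab_def by simp
        also have "\<dots> = hat J uf C" unfolding uf_def using hat_comp[OF RJ uG fLG] hu hfL by simp
        also have "\<dots> = uf ` C" using hat_in[OF RJ ufG CQ] by simp
        finally have e: "g ` C = uf ` C" .
        have "hat J v C = v ` C" using hat_in[OF RJ vG CQ] by simp
        also have "\<dots> = ginv uf ` (g ` C)" unfolding v_def by (simp add: image_comp)
        also have "\<dots> = (ginv uf \<circ> uf) ` C" using e by (simp add: image_comp)
        also have "\<dots> = C" using ginv_comp[OF ufG] by simp
        finally show ?thesis .
      qed
      then have vU: "v \<in> U" using Ufix[OF vG] by blast
      have "u \<circ> fL \<circ> v = g"
      proof
        fix z show "(u \<circ> fL \<circ> v) z = g z" unfolding v_def using ginv_r[OF ufG] unfolding uf_def by simp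
      qed
      then have "(fL, g) \<in> roelcke_entourage G U"
        unfolding roelcke_entourage_def using fLG g uU vU by force
      moreover have "fL \<in> Lf ` Fh" unfolding fL_def using fh(1) by blast
      ultimately show "g \<in> (\<Union>f\<in>Lf ` Fh. roelcke_entourage G U `` {f})" by blast
    qed
  qed
qed

end

theorem theorem5p3:
  fixes X :: "'a set" and le :: "'a \<Rightarrow> 'a \<Rightarrow> bool"
  assumes "homogeneous X le"
    and "\<not> simple_chain X le"
    and "\<forall>J. proper_regular_interval X le J \<longrightarrow> \<not> simple_chain J le"
  shows "roelcke_precompact (Aut X le) (nhds_id_p X le) \<longleftrightarrow>
    (\<forall>J. proper_regular_interval X le J \<longrightarrow>
       roelcke_precompact (Aut (quot_carrier X le J) (quot_le le))
                          (nhds_id_perm (quot_carrier X le J) (quot_le le)))"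
proof -
  interpret hc X le using assms(1) by unfold_locales
  have ex: "\<exists>J. proper_regular_interval X le J" using assms(1,2) unfolding simple_chain_def by blast
  have two: "\<forall>x\<in>X. \<exists>y\<in>X. y \<noteq> x"
  proof
    fix x assume x: "x \<in> X"
    obtain J where J: "proper_regular_interval X le J" using ex by blast
    obtain p where p: "p \<in> J" using reg_ne[OF prop_reg[OF J]] by blast
    obtain q where q: "q \<in> J" "q \<noteq> p" using prop_two[OF J p] by blast
    have "p \<in> X" "q \<in> X" using p q reg_sub[OF prop_reg[OF J]] by auto
    then show "\<exists>y\<in>X. y \<noteq> x" using q(2) by metis
  qed
  show ?thesis
  proof
    assume RP: "roelcke_precompact (Aut X le) (nhds_id_p X le)"
    show "\<forall>J. proper_regular_interval X le J \<longrightarrow>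
       roelcke_precompact (Aut (quot_carrier X le J) (quot_le le))
                          (nhds_id_perm (quot_carrier X le J) (quot_le le))"
      using fwd[OF RP] by blast
  next
    assume RQ: "\<forall>J. proper_regular_interval X le J \<longrightarrow>
       roelcke_precompact (Aut (quot_carrier X le J) (quot_le le))
                          (nhds_id_perm (quot_carrier X le J) (quot_le le))"
    show "roelcke_precompact (Aut X le) (nhds_id_p X le)"
      using bwd[OF ex assms(3) two RQ] .
  qed
qed

end
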